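(* Let $R=\bigoplus_{\alpha\in\Gamma}R_{\alpha}$ be a graded integral domain and let $\star$ be a semistar operation on $R$ such that $R^{\star}\subsetneq R_H$. Then every invertible ideal of $\mathrm{NA}(R,\star)$ is principal.
   Context: $\Gamma$ is a commutative cancellative monoid (written additively) whose quotient group $\langle\Gamma\rangle$ is torsion-free. A graded integral domain $R=\bigoplus_{\alpha\in\Gamma}R_\alpha$ is an integral domain that is the direct sum of additive subgroups $R_\alpha$ with $R_\alpha R_\beta\subseteq R_{\alpha+\beta}$. $K$ is its quotient field, $H$ the set of nonzero homogeneous elements of $R$, and $R_H$ the homogeneous quotient field. For $a\in R_H$, $C(a)$ is the $R$-submodule of $R_H$ generated by the homogeneous components of $a$; for $f=f_0+\cdots+f_nX^n\in R[X]$, $A_f:=\sum_i C(f_i)$. A semistar operation on $R$ is a map $\star$ from the set $\overline{\mathcal F}(R)$ of nonzero $R$-submodules of $K$ to itself, $E\mapsto E^\star$, such that for all $0\ne x\in K$ and $E,F$: $(xE)^\star=xE^\star$; $E\subseteq F\Rightarrow E^\star\subseteq F^\star$; $E\subseteq E^\star$; $(E^\star)^\star=E^\star$. $N(\star):=\{f\in R[X]: f\ne0,\ A_f^\star=R^\star\}$ and $\mathrm{NA}(R,\star):=R[X]_{N(\star)}$. *)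

theory Defs
  imports "HOL-Computational_Algebra.Polynomial" "HOL-Computational_Algebra.Fraction_Field"
begin

definition subring :: "'a::field set \<Rightarrow> bool" where
  "subring R \<longleftrightarrow> 0 \<in> R \<and> 1 \<in> R \<and> (\<forall>x\<in>R. \<forall>y\<in>R. x + y \<in> R \<and> x - y \<in> R \<and> x * y \<in> R)"

definition submodule :: "'a::field set \<Rightarrow> 'a set \<Rightarrow> bool" where
  "submodule R M \<longleftrightarrow> 0 \<in> M \<and> (\<forall>x\<in>M. \<forall>y\<in>M. x + y \<in> M) \<and> (\<forall>r\<in>R. \<forall>x\<in>M. r * x \<in> M)"

definition gen_mod :: "'a::field set \<Rightarrow> 'a set \<Rightarrow> 'a set" where
  "gen_mod R S = {x. \<exists>n::nat. \<exists>r s. (\<forall>i<n. r i \<in> R \<and> s i \<in> S) \<and> x = (\<Sum>i<n. r i * s i)}"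

definition mod_prod :: "'a::field set \<Rightarrow> 'a set \<Rightarrow> 'a set" where
  "mod_prod A B = {x. \<exists>n::nat. \<exists>a b. (\<forall>i<n. a i \<in> A \<and> b i \<in> B) \<and> x = (\<Sum>i<n. a i * b i)}"

definition ideal_of :: "'a::field set \<Rightarrow> 'a set \<Rightarrow> bool" where
  "ideal_of D I \<longleftrightarrow> I \<subseteq> D \<and> submodule D I"

definition invertible_ideal :: "'a::field set \<Rightarrow> 'a set \<Rightarrow> bool" where
  "invertible_ideal D I \<longleftrightarrow> ideal_of D I \<and> (\<exists>J. submodule D J \<and> mod_prod I J = D)"

definition principal_ideal :: "'a::field set \<Rightarrow> 'a set \<Rightarrow> bool" where
  "principal_ideal D I \<longleftrightarrow> (\<exists>a\<in>D. I = {d * a | d. d \<in> D})"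

definition ntimes :: "nat \<Rightarrow> 'g::comm_monoid_add \<Rightarrow> 'g" where
  "ntimes n a = (\<Sum>i<n. a)"

text \<open>The quotient group of the cancellative monoid is torsion-free.\<close>
definition torsion_free_quotient :: "'g::cancel_comm_monoid_add itself \<Rightarrow> bool" where
  "torsion_free_quotient _ \<longleftrightarrow> (\<forall>n>0. \<forall>a b::'g. ntimes n a = ntimes n b \<longrightarrow> a = b)"

definition is_decomp :: "('g \<Rightarrow> 'k::field set) \<Rightarrow> 'k \<Rightarrow> ('g \<Rightarrow> 'k) \<Rightarrow> bool" where
  "is_decomp gr x c \<longleftrightarrow> finite {\<alpha>. c \<alpha> \<noteq> 0} \<and> (\<forall>\<alpha>. c \<alpha> \<in> gr \<alpha>) \<and> x = (\<Sum>\<alpha>\<in>{\<alpha>. c \<alpha> \<noteq> 0}. c \<alpha>)"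

definition graded_domain :: "'k::field set \<Rightarrow> ('g::cancel_comm_monoid_add \<Rightarrow> 'k set) \<Rightarrow> bool" where
  "graded_domain R gr \<longleftrightarrow> subring R \<and>
     (\<forall>\<alpha>. gr \<alpha> \<subseteq> R \<and> 0 \<in> gr \<alpha> \<and> (\<forall>x\<in>gr \<alpha>. \<forall>y\<in>gr \<alpha>. x - y \<in> gr \<alpha>)) \<and>
     (\<forall>\<alpha> \<beta>. \<forall>x\<in>gr \<alpha>. \<forall>y\<in>gr \<beta>. x * y \<in> gr (\<alpha> + \<beta>)) \<and>
     (\<forall>x\<in>R. \<exists>!c. is_decomp gr x c)"

definition components :: "('g \<Rightarrow> 'k::field set) \<Rightarrow> 'k \<Rightarrow> 'g \<Rightarrow> 'k" where
  "components gr x = (THE c. is_decomp gr x c)"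

definition homog :: "('g \<Rightarrow> 'k::field set) \<Rightarrow> 'k set" where
  "homog gr = {x. x \<noteq> 0 \<and> (\<exists>\<alpha>. x \<in> gr \<alpha>)}"

definition homog_quot :: "'k::field set \<Rightarrow> ('g \<Rightarrow> 'k set) \<Rightarrow> 'k set" where
  "homog_quot R gr = {a / s | a s. a \<in> R \<and> s \<in> homog gr}"

definition content_mod :: "'k::field set \<Rightarrow> ('g \<Rightarrow> 'k set) \<Rightarrow> 'k \<Rightarrow> 'k set" where
  "content_mod R gr a = gen_mod R (range (components gr a))"

definition A_poly :: "'k::field set \<Rightarrow> ('g \<Rightarrow> 'k set) \<Rightarrow> 'k poly \<Rightarrow> 'k set" where
  "A_poly R gr f = {x. \<exists>y. (\<forall>i\<le>degree f. y i \<in> content_mod R gr (coeff f i)) \<and> x = (\<Sum>i\<le>degree f. y i)}"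

definition Fbar :: "'k::field set \<Rightarrow> 'k set set" where
  "Fbar R = {E. submodule R E \<and> E \<noteq> {0}}"

definition semistar :: "'k::field set \<Rightarrow> ('k set \<Rightarrow> 'k set) \<Rightarrow> bool" where
  "semistar R st \<longleftrightarrow>
     (\<forall>E\<in>Fbar R. st E \<in> Fbar R) \<and>
     (\<forall>E\<in>Fbar R. \<forall>x. x \<noteq> 0 \<longrightarrow> st ((\<lambda>e. x * e) ` E) = (\<lambda>e. x * e) ` st E) \<and>
     (\<forall>E\<in>Fbar R. \<forall>F\<in>Fbar R. E \<subseteq> F \<longrightarrow> st E \<subseteq> st F) \<and>
     (\<forall>E\<in>Fbar R. E \<subseteq> st E) \<and>
     (\<forall>E\<in>Fbar R. st (st E) = st E)"

definition polys_over :: "'k::field set \<Rightarrow> 'k poly set" where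
  "polys_over R = {f. \<forall>i. coeff f i \<in> R}"

definition N_star :: "'k::field set \<Rightarrow> ('g \<Rightarrow> 'k set) \<Rightarrow> ('k set \<Rightarrow> 'k set) \<Rightarrow> 'k poly set" where
  "N_star R gr st = {f \<in> polys_over R. f \<noteq> 0 \<and> st (A_poly R gr f) = st R}"

text \<open>NA(R,star) = R[X]_{N(star)}, as a subring of K(X) = 'k poly fract.\<close>
definition NA :: "'k::field set \<Rightarrow> ('g \<Rightarrow> 'k set) \<Rightarrow> ('k set \<Rightarrow> 'k set) \<Rightarrow> 'k poly fract set" where
  "NA R gr st = {Fract f g | f g. f \<in> polys_over R \<and> g \<in> N_star R gr st}"

end

theory Submission
  imports Defs
begin

lemma sum_concat_nat: "(\<Sum>i<(n::nat)+m. g i) = (\<Sum>i<n. g i) + (\<Sum>i<m. g (n+i))"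
  by (induction m) (simp_all add: add.assoc)

lemma subring_sum:
  assumes "subring R" "\<And>i. i \<in> A \<Longrightarrow> f i \<in> R" shows "sum f A \<in> R"
proof (cases "finite A")
  case True thus ?thesis using assms(2)
  proof (induction A rule: finite_induct)
    case empty thus ?case using assms(1) by (simp add: subring_def)
  next
    case (insert a A) thus ?case using assms(1) by (simp add: subring_def)
  qed
next
  case False thus ?thesis using assms(1) by (simp add: subring_def)
qed

lemma polys_over_add: "subring R \<Longrightarrow> p \<in> polys_over R \<Longrightarrow> q \<in> polys_over R \<Longrightarrow> p + q \<in> polys_over R"
  by (simp add: polys_over_def subring_def)

lemma polys_over_mult:
  assumes "subring R" "p \<in> polys_over R" "q \<in> polys_over R" shows "p * q \<in> polys_over R"
  unfolding polys_over_def coeff_mult mem_Collect_eq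
proof (intro allI subring_sum[OF assms(1)])
  fix n i show "coeff p i * coeff q (n - i) \<in> R"
    using assms by (simp add: polys_over_def subring_def)
qed

lemma polys_over_sum:
  assumes "subring R" "\<And>i. i \<in> A \<Longrightarrow> p i \<in> polys_over R" shows "sum p A \<in> polys_over R"
  unfolding polys_over_def coeff_sum mem_Collect_eq
proof (intro allI subring_sum[OF assms(1)])
  fix n i assume "i \<in> A" thus "coeff (p i) n \<in> R" using assms(2) by (simp add: polys_over_def)
qed

lemma polys_over_monom: "subring R \<Longrightarrow> monom 1 k \<in> polys_over R"
  by (simp add: polys_over_def subring_def coeff_monom)

lemma polys_over_one: "subring R \<Longrightarrow> 1 \<in> polys_over R"
  by (simp add: polys_over_def subring_def coeff_1)

lemma decomp_components:
  assumes "graded_domain R gr" "x \<in> R" shows "is_decomp gr x (components gr x)"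
  using assms unfolding graded_domain_def components_def by (metis theI')

lemma gen_mod_sub:
  assumes "subring R" "S \<subseteq> R" shows "gen_mod R S \<subseteq> R"
proof
  fix x assume "x \<in> gen_mod R S"
  then obtain n :: nat and r s where rs: "\<forall>i<n. r i \<in> R \<and> s i \<in> S" and x: "x = (\<Sum>i<n. r i * s i)"
    unfolding gen_mod_def mem_Collect_eq by blast
  show "x \<in> R" unfolding x
    by (rule subring_sum[OF assms(1)]) (use rs assms in \<open>auto simp: subring_def\<close>)
qed

lemma gen_mod_zero: "0 \<in> gen_mod R S"
  unfolding gen_mod_def by (rule CollectI, rule exI[of _ 0]) simp

lemma gen_mod_gen: "1 \<in> R \<Longrightarrow> s \<in> S \<Longrightarrow> s \<in> gen_mod R S"
  unfolding gen_mod_def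
  by (rule CollectI, rule exI[of _ 1], rule exI[of _ "\<lambda>_. 1"], rule exI[of _ "\<lambda>_. s"]) simp

lemma gen_mod_submodule:
  assumes "subring R" shows "submodule R (gen_mod R S)"
  unfolding submodule_def
proof (intro conjI ballI)
  show "0 \<in> gen_mod R S" by (rule gen_mod_zero)
next
  fix x y assume "x \<in> gen_mod R S" "y \<in> gen_mod R S"
  then obtain n m :: nat and r s r' s' where rs: "\<forall>i<n. r i \<in> R \<and> s i \<in> S" and x: "x = (\<Sum>i<n. r i * s i)"
    and rs': "\<forall>i<m. r' i \<in> R \<and> s' i \<in> S" and y: "y = (\<Sum>i<m. r' i * s' i)"
    unfolding gen_mod_def mem_Collect_eq by blast
  define r2 where "r2 = (\<lambda>i. if i < n then r i else r' (i - n))"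
  define s2 where "s2 = (\<lambda>i. if i < n then s i else s' (i - n))"
  have "x + y = (\<Sum>i<n+m. r2 i * s2 i)"
    unfolding sum_concat_nat x y r2_def s2_def by simp
  moreover have "\<forall>i<n+m. r2 i \<in> R \<and> s2 i \<in> S" using rs rs' unfolding r2_def s2_def by auto
  ultimately show "x + y \<in> gen_mod R S" unfolding gen_mod_def mem_Collect_eq by blast
next
  fix a x assume a: "a \<in> R" and "x \<in> gen_mod R S"
  then obtain n :: nat and r s where rs: "\<forall>i<n. r i \<in> R \<and> s i \<in> S" and x: "x = (\<Sum>i<n. r i * s i)"
    unfolding gen_mod_def mem_Collect_eq by blast
  have "a * x = (\<Sum>i<n. (a * r i) * s i)" unfolding x by (simp add: sum_distrib_left mult.assoc)
  moreover have "\<forall>i<n. a * r i \<in> R \<and> s i \<in> S" using rs a assms by (simp add: subring_def)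
  ultimately show "a * x \<in> gen_mod R S" unfolding gen_mod_def
    by (intro CollectI exI[of _ n] exI[of _ "\<lambda>i. a * r i"] exI[of _ s]) simp
qed

lemma A_poly_submodule:
  assumes "subring R" shows "submodule R (A_poly R gr f)"
proof -
  have cm: "submodule R (content_mod R gr a)" for a
    unfolding content_mod_def by (rule gen_mod_submodule[OF assms])
  show ?thesis unfolding submodule_def
  proof (intro conjI ballI)
    show "0 \<in> A_poly R gr f" unfolding A_poly_def
      by (rule CollectI, rule exI[of _ "\<lambda>_. 0"]) (use cm in \<open>simp add: submodule_def\<close>)
  next
    fix x y assume "x \<in> A_poly R gr f" "y \<in> A_poly R gr f"
    then obtain u v where u: "\<forall>i\<le>degree f. u i \<in> content_mod R gr (coeff f i)" "x = (\<Sum>i\<le>degree f. u i)"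
      and v: "\<forall>i\<le>degree f. v i \<in> content_mod R gr (coeff f i)" "y = (\<Sum>i\<le>degree f. v i)"
      unfolding A_poly_def mem_Collect_eq by blast
    show "x + y \<in> A_poly R gr f" unfolding A_poly_def
      by (rule CollectI, rule exI[of _ "\<lambda>i. u i + v i"]) (use u v cm in \<open>simp add: submodule_def sum.distrib\<close>)
  next
    fix a x assume a: "a \<in> R" and "x \<in> A_poly R gr f"
    then obtain u where u: "\<forall>i\<le>degree f. u i \<in> content_mod R gr (coeff f i)" "x = (\<Sum>i\<le>degree f. u i)"
      unfolding A_poly_def mem_Collect_eq by blast
    show "a * x \<in> A_poly R gr f" unfolding A_poly_def
      by (rule CollectI, rule exI[of _ "\<lambda>i. a * u i"]) (use u cm a in \<open>simp add: submodule_def sum_distrib_left\<close>)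
  qed
qed

lemma A_poly_sub:
  assumes gd: "graded_domain R gr" and f: "f \<in> polys_over R" shows "A_poly R gr f \<subseteq> R"
proof
  have sr: "subring R" using gd by (simp add: graded_domain_def)
  have cm: "content_mod R gr (coeff f i) \<subseteq> R" for i
  proof -
    have c: "coeff f i \<in> R" using f by (simp add: polys_over_def)
    have "range (components gr (coeff f i)) \<subseteq> R"
      using decomp_components[OF gd c] gd unfolding is_decomp_def graded_domain_def by blast
    thus ?thesis unfolding content_mod_def by (rule gen_mod_sub[OF sr])
  qed
  fix x assume "x \<in> A_poly R gr f"
  then obtain u where u: "\<forall>i\<le>degree f. u i \<in> content_mod R gr (coeff f i)" "x = (\<Sum>i\<le>degree f. u i)"
    unfolding A_poly_def mem_Collect_eq by blast
  show "x \<in> R" unfolding u(2) by (rule subring_sum[OF sr]) (use u(1) cm in auto)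
qed

lemma A_poly_nonzero:
  assumes gd: "graded_domain R gr" and f: "f \<in> polys_over R" and nz: "f \<noteq> 0"
  shows "A_poly R gr f \<noteq> {0}"
proof -
  have sr: "subring R" using gd by (simp add: graded_domain_def)
  let ?c = "coeff f (degree f)"
  have c0: "?c \<noteq> 0" using nz by simp
  have cR: "?c \<in> R" using f by (simp add: polys_over_def)
  have dc: "is_decomp gr ?c (components gr ?c)" by (rule decomp_components[OF gd cR])
  have "\<exists>\<alpha>. components gr ?c \<alpha> \<noteq> 0"
  proof (rule ccontr)
    assume "\<not> ?thesis"
    hence "{\<alpha>. components gr ?c \<alpha> \<noteq> 0} = {}" by auto
    with dc c0 show False unfolding is_decomp_def by simp
  qed
  then obtain \<alpha> where al: "components gr ?c \<alpha> \<noteq> 0" by blast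
  let ?z = "components gr ?c \<alpha>"
  have "?z \<in> content_mod R gr ?c"
    unfolding content_mod_def by (rule gen_mod_gen) (use sr in \<open>auto simp: subring_def\<close>)
  hence "?z \<in> A_poly R gr f" unfolding A_poly_def
    by (intro CollectI exI[of _ "\<lambda>i. if i = degree f then ?z else 0"])
       (auto simp: content_mod_def gen_mod_zero)
  with al show ?thesis by blast
qed

lemma A_poly_shift:
  assumes Q: "Q \<noteq> 0" and co: "\<forall>i\<le>degree Q. coeff H (m+i) = coeff Q i"
  shows "A_poly R gr Q \<subseteq> A_poly R gr H"
proof
  have dH: "m + degree Q \<le> degree H"
    using co Q by (intro le_degree) simp
  fix x assume "x \<in> A_poly R gr Q"
  then obtain y where y: "\<forall>i\<le>degree Q. y i \<in> content_mod R gr (coeff Q i)" "x = (\<Sum>i\<le>degree Q. y i)"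
    unfolding A_poly_def mem_Collect_eq by blast
  define y' where "y' = (\<lambda>j. if m \<le> j \<and> j \<le> m + degree Q then y (j - m) else 0)"
  have mem: "\<forall>j\<le>degree H. y' j \<in> content_mod R gr (coeff H j)"
  proof (intro allI impI)
    fix j assume "j \<le> degree H"
    show "y' j \<in> content_mod R gr (coeff H j)"
    proof (cases "m \<le> j \<and> j \<le> m + degree Q")
      case True
      hence "coeff H j = coeff Q (j - m)" using co[rule_format, of "j - m"] by (simp add: le_diff_conv)
      thus ?thesis using True y(1) unfolding y'_def by auto
    next
      case False hence "y' j = 0" unfolding y'_def by meson
      thus ?thesis by (simp add: content_mod_def gen_mod_zero)
    qed
  qed
  have "(\<Sum>j\<le>degree H. y' j) = (\<Sum>j\<in>{m..m + degree Q}. y (j - m))"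
  proof -
    have "(\<Sum>j\<le>degree H. y' j) = (\<Sum>j\<in>{j\<in>{..degree H}. m \<le> j \<and> j \<le> m + degree Q}. y (j - m))"
      unfolding y'_def by (rule sum.inter_filter[symmetric]) simp
    also have "{j\<in>{..degree H}. m \<le> j \<and> j \<le> m + degree Q} = {m..m + degree Q}" using dH by auto
    finally show ?thesis .
  qed
  also have "\<dots> = (\<Sum>i\<le>degree Q. y i)"
    using sum.shift_bounds_cl_nat_ivl[of "\<lambda>j. y (j - m)" 0 m "degree Q"]
    by (simp add: atMost_atLeast0 add.commute)
  finally have "x = (\<Sum>j\<le>degree H. y' j)" using y(2) by simp
  with mem show "x \<in> A_poly R gr H" unfolding A_poly_def by blast
qed

lemma N_by_sub:
  assumes ss: "semistar R st" and gd: "graded_domain R gr" and QN: "Q \<in> N_star R gr st"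
    and H: "H \<in> polys_over R" "H \<noteq> 0" and sub: "A_poly R gr Q \<subseteq> A_poly R gr H"
  shows "H \<in> N_star R gr st"
proof -
  have sr: "subring R" using gd by (simp add: graded_domain_def)
  have RF: "R \<in> Fbar R" unfolding Fbar_def submodule_def using sr by (auto simp: subring_def)
  have Q: "Q \<in> polys_over R" "Q \<noteq> 0" "st (A_poly R gr Q) = st R" using QN by (auto simp: N_star_def)
  have QF: "A_poly R gr Q \<in> Fbar R" unfolding Fbar_def
    using A_poly_submodule[OF sr] A_poly_nonzero[OF gd Q(1,2)] by auto
  have HF: "A_poly R gr H \<in> Fbar R" unfolding Fbar_def
    using A_poly_submodule[OF sr] A_poly_nonzero[OF gd H] by auto
  have m: "\<forall>E\<in>Fbar R. \<forall>F\<in>Fbar R. E \<subseteq> F \<longrightarrow> st E \<subseteq> st F" using ss by (simp add: semistar_def)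
  have "st (A_poly R gr Q) \<subseteq> st (A_poly R gr H)" using m QF HF sub by blast
  moreover have "st (A_poly R gr H) \<subseteq> st R" using m HF RF A_poly_sub[OF gd H(1)] by blast
  ultimately have "st (A_poly R gr H) = st R" using Q(3) by blast
  thus ?thesis using H by (simp add: N_star_def)
qed

lemma sum_fract:
  fixes Q :: "'a::idom"
  assumes "Q \<noteq> 0" shows "(\<Sum>i\<in>A. Fract (g i) Q) = Fract (\<Sum>i\<in>A. g i) Q"
proof (cases "finite A")
  case True thus ?thesis
  proof (induction A rule: finite_induct)
    case empty thus ?case using assms by (simp add: Zero_fract_def eq_fract)
  next
    case (insert a A)
    have "Fract (g a) Q + Fract (sum g A) Q = Fract ((g a + sum g A) * Q) (Q * Q)"
      using assms by (simp add: distrib_right)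
    also have "\<dots> = Fract (Q * (g a + sum g A)) (Q * Q)" by (simp add: mult.commute)
    also have "\<dots> = Fract (g a + sum g A) Q" using assms by (rule mult_fract_cancel)
    finally show ?case using insert by simp
  qed
next
  case False thus ?thesis using assms by (simp add: Zero_fract_def eq_fract)
qed

lemma coeff_term:
  fixes P :: "'a::comm_ring_1 poly"
  assumes "i < n" "j < n" "k < d" "degree P < d"
  shows "coeff (monom 1 (i*d + (n-j)*d) * P) (n*d+k) = (if j = i then coeff P k else 0)"
proof -
  have e: "i*d + (n-j)*d = (i + (n-j))*d" by (simp add: add_mult_distrib)
  consider "j = i" | "j < i" | "i < j" by linarith
  thus ?thesis
  proof cases
    case 1
    hence "i + (n-j) = n" using assms by simp
    thus ?thesis using 1 e by (simp add: coeff_monom_mult)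
  next
    case 2
    hence "Suc n \<le> i + (n-j)" using assms by simp
    hence "Suc n * d \<le> (i + (n-j))*d" by (rule mult_le_mono1)
    hence "n*d+k < (i + (n-j))*d" using assms by simp
    thus ?thesis using 2 e by (simp add: coeff_monom_mult)
  next
    case 3
    hence "i + (n-j) + 1 \<le> n" using assms by simp
    hence "(i + (n-j) + 1) * d \<le> n * d" by (rule mult_le_mono1)
    hence le: "(i + (n-j))*d + d \<le> n*d" by (simp add: add_mult_distrib)
    hence "degree P < n*d+k - (i + (n-j))*d" using assms by linarith
    hence "coeff P (n*d+k - (i + (n-j))*d) = 0" by (rule coeff_eq_0)
    thus ?thesis using 3 e le by (simp add: coeff_monom_mult)
  qed
qed

lemma submodule_sum:
  assumes "submodule D M" "\<And>i. i \<in> A \<Longrightarrow> g i \<in> M" shows "sum g A \<in> M"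
proof (cases "finite A")
  case True thus ?thesis using assms(2)
  proof (induction A rule: finite_induct)
    case empty thus ?case using assms(1) by (simp add: submodule_def)
  next
    case (insert a A) thus ?case using assms(1) by (simp add: submodule_def)
  qed
next
  case False thus ?thesis using assms(1) by (simp add: submodule_def)
qed

theorem theorem2p7:
  fixes R :: "'k::field set"
    and gr :: "'g::cancel_comm_monoid_add \<Rightarrow> 'k set"
    and st :: "'k set \<Rightarrow> 'k set"
  assumes tf: "torsion_free_quotient TYPE('g)"
    and gd: "graded_domain R gr"
    and qf: "\<forall>x::'k. \<exists>a\<in>R. \<exists>b\<in>R. b \<noteq> 0 \<and> x = a / b"
    and ss: "semistar R st"
    and proper: "st R \<subset> homog_quot R gr"
  shows "\<forall>I. invertible_ideal (NA R gr st) I \<longrightarrow> principal_ideal (NA R gr st) I"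
proof (intro allI impI)
  fix I assume inv: "invertible_ideal (NA R gr st) I"
  define D where "D = NA R gr st"
  define N where "N = N_star R gr st"
  have sr: "subring R" using gd by (simp add: graded_domain_def)
  have NAmem: "x \<in> D \<longleftrightarrow> (\<exists>p q. x = Fract p q \<and> p \<in> polys_over R \<and> q \<in> N)" for x
    unfolding D_def NA_def N_def by blast
  have Nq: "q \<in> polys_over R \<and> q \<noteq> 0" if "q \<in> N" for q using that by (simp add: N_def N_star_def)
  from inv obtain J where ID: "I \<subseteq> D" and subI: "submodule D I" and subJ: "submodule D J"
    and prod: "mod_prod I J = D"
    unfolding invertible_ideal_def ideal_of_def D_def by blast
  have Imult: "u * x \<in> I" if "u \<in> D" "x \<in> I" for u x using subI that by (simp add: submodule_def)
  have Jmult: "u * x \<in> J" if "u \<in> D" "x \<in> J" for u x using subJ that by (simp add: submodule_def)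
  have prod_in: "x * y \<in> D" if "x \<in> I" "y \<in> J" for x y
  proof -
    have "x * y \<in> mod_prod I J" unfolding mod_prod_def
      by (intro CollectI exI[of _ "1::nat"] exI[of _ "\<lambda>_. x"] exI[of _ "\<lambda>_. y"]) (simp add: that)
    thus ?thesis using prod by simp
  qed
  have Dmult: "u * v \<in> D" if "u \<in> D" "v \<in> D" for u v
  proof -
    from that(2) have "v \<in> mod_prod I J" using prod by simp
    then obtain n :: nat and a b where ab: "\<forall>i<n. a i \<in> I \<and> b i \<in> J" and v: "v = (\<Sum>i<n. a i * b i)"
      unfolding mod_prod_def mem_Collect_eq by blast
    have "u * v = (\<Sum>i<n. (u * a i) * b i)" unfolding v by (simp add: sum_distrib_left mult.assoc)
    moreover have "\<forall>i<n. u * a i \<in> I \<and> b i \<in> J" using ab Imult that(1) by blast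
    ultimately have "u * v \<in> mod_prod I J" unfolding mod_prod_def
      by (intro CollectI exI[of _ n] exI[of _ "\<lambda>i. u * a i"] exI[of _ b]) simp
    thus ?thesis using prod by simp
  qed
  have "(0::'k poly fract) \<in> mod_prod I J" unfolding mod_prod_def
    by (intro CollectI exI[of _ "0::nat"]) simp
  hence "(0::'k poly fract) \<in> D" using prod by simp
  then obtain g0 where g0: "g0 \<in> N" using NAmem by blast
  have polyD: "Fract p 1 \<in> D" if "p \<in> polys_over R" for p
  proof -
    have "Fract p 1 = Fract (p * g0) g0" using Nq[OF g0] by (simp add: eq_fract)
    thus ?thesis using NAmem polys_over_mult[OF sr that] g0 Nq[OF g0] by blast
  qed
  have invD: "Fract 1 q \<in> D" if "q \<in> N" for q using NAmem polys_over_one[OF sr] that by blast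
  have oneD: "1 \<in> D" using polyD[OF polys_over_one[OF sr]] by (simp add: One_fract_def)
  hence "1 \<in> mod_prod I J" using prod by simp
  then obtain n :: nat and a b where ab: "\<forall>i<n. a i \<in> I \<and> b i \<in> J" and one: "1 = (\<Sum>i<n. a i * b i)"
    unfolding mod_prod_def mem_Collect_eq by blast
  have cd: "\<exists>Q P. Q \<in> N \<and> (\<forall>s\<in>S. P s \<in> polys_over R \<and> x s = Fract (P s) Q)"
    if "finite S" "\<forall>s\<in>S. x s \<in> D" for S :: "(nat \<times> nat) set" and x
    using that
  proof (induction S rule: finite_induct)
    case empty show ?case using g0 by blast
  next
    case (insert s S)
    from insert.IH insert.prems obtain Q P where Q: "Q \<in> N"
      and P: "\<forall>t\<in>S. P t \<in> polys_over R \<and> x t = Fract (P t) Q" by auto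
    from insert.prems have "x s \<in> D" by simp
    then obtain p q where pq: "x s = Fract p q" "p \<in> polys_over R" "q \<in> N" using NAmem by blast
    have "Fract 1 Q * Fract 1 q \<in> D" using Dmult invD Q pq(3) by blast
    then obtain p' q' where pq': "Fract 1 (Q*q) = Fract p' q'" "p' \<in> polys_over R" "q' \<in> N"
      using NAmem by auto
    have Q0: "Q \<noteq> 0" "q \<noteq> 0" "q' \<noteq> 0" using Nq Q pq(3) pq'(3) by auto
    have e: "q' = p' * (Q * q)" using pq'(1) eq_fract(1)[of "Q*q" q' 1 p'] Q0 by simp
    show ?case
    proof (intro exI[of _ q'] exI[of _ "\<lambda>t. if t = s then p * p' * Q else P t * p' * q"] conjI ballI)
      show "q' \<in> N" by (rule pq'(3))
    next
      fix t assume t: "t \<in> insert s S"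
      show "(if t = s then p * p' * Q else P t * p' * q) \<in> polys_over R"
        using t P pq(2) pq'(2) Q pq(3) Nq sr by (auto intro!: polys_over_mult)
      show "x t = Fract (if t = s then p * p' * Q else P t * p' * q) q'"
      proof (cases "t = s")
        case True thus ?thesis using pq(1) Q0 e by (simp add: eq_fract ac_simps)
      next
        case False hence "t \<in> S" using t by simp
        thus ?thesis using False P Q0 e by (simp add: eq_fract ac_simps)
      qed
    qed
  qed
  obtain Q P where Q: "Q \<in> N"
    and P: "\<forall>s\<in>{..<n}\<times>{..<n}. P s \<in> polys_over R \<and> a (fst s) * b (snd s) = Fract (P s) Q"
    using cd[of "{..<n}\<times>{..<n}" "\<lambda>s. a (fst s) * b (snd s)"] prod_in ab by auto
  have Q0: "Q \<noteq> 0" and QR: "Q \<in> polys_over R" using Nq[OF Q] by auto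
  have Pij: "P (i,j) \<in> polys_over R \<and> a i * b j = Fract (P (i,j)) Q" if "i < n" "j < n" for i j
    using P that by auto
  have diag: "(\<Sum>i<n. P (i,i)) = Q"
  proof -
    have "Fract (\<Sum>i<n. P (i,i)) Q = (\<Sum>i<n. Fract (P (i,i)) Q)" by (rule sum_fract[symmetric, OF Q0])
    also have "\<dots> = (\<Sum>i<n. a i * b i)" using Pij by simp
    also have "\<dots> = 1" using one by simp
    finally have "Fract (\<Sum>i<n. P (i,i)) Q = Fract 1 1" by (simp add: One_fract_def)
    thus ?thesis using eq_fract(1)[of Q 1] Q0 by simp
  qed
  define d where "d = Suc (\<Sum>s\<in>{..<n}\<times>{..<n}. degree (P s))"
  have dP: "degree (P (i,j)) < d" if "i < n" "j < n" for i j
  proof -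
    have "degree (P (i,j)) \<le> (\<Sum>s\<in>{..<n}\<times>{..<n}. degree (P s))"
      by (rule member_le_sum) (use that in auto)
    thus ?thesis unfolding d_def by simp
  qed
  define H where "H = (\<Sum>i<n. \<Sum>j<n. monom 1 (i*d + (n-j)*d) * P (i,j))"
  have HR: "H \<in> polys_over R" unfolding H_def
    by (intro polys_over_sum[OF sr] polys_over_mult[OF sr] polys_over_monom[OF sr]) (use Pij in auto)
  have coH: "coeff H (n*d+k) = coeff Q k" if k: "k < d" for k
  proof -
    have "coeff H (n*d+k) = (\<Sum>i<n. \<Sum>j<n. coeff (monom 1 (i*d + (n-j)*d) * P (i,j)) (n*d+k))"
      unfolding H_def coeff_sum ..
    also have "\<dots> = (\<Sum>i<n. \<Sum>j<n. if j = i then coeff (P (i,j)) k else 0)"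
      by (intro sum.cong refl) (simp add: coeff_term k dP)
    also have "\<dots> = (\<Sum>i<n. coeff (P (i,i)) k)" by simp
    also have "\<dots> = coeff Q k" unfolding diag[symmetric] coeff_sum ..
    finally show ?thesis .
  qed
  have degQ: "degree Q < d"
  proof (rule ccontr)
    assume "\<not> ?thesis"
    hence "coeff Q (degree Q) = (\<Sum>i<n. coeff (P (i,i)) (degree Q))"
      unfolding diag[symmetric] coeff_sum by (simp add: diag)
    also have "\<dots> = 0" using dP \<open>\<not> degree Q < d\<close>
      by (intro sum.neutral ballI coeff_eq_0) (metis lessThan_iff not_less order_less_le_trans)
    finally show False using Q0 by simp
  qed
  have H0: "H \<noteq> 0"
  proof
    assume "H = 0"
    hence "coeff H (n*d + degree Q) = 0" by simp
    thus False using coH[OF degQ] Q0 by simp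
  qed
  have "A_poly R gr Q \<subseteq> A_poly R gr H"
    by (rule A_poly_shift[OF Q0, where m="n*d"]) (use coH degQ in auto)
  hence HN: "H \<in> N" using N_by_sub[OF ss gd _ HR H0] Q unfolding N_def by blast
  define f where "f = (\<Sum>i<n. Fract (monom 1 (i*d)) 1 * a i)"
  define y where "y = (\<Sum>j<n. Fract (monom 1 ((n-j)*d)) 1 * b j)"
  have fI: "f \<in> I" unfolding f_def
    by (rule submodule_sum[OF subI]) (use Imult polyD polys_over_monom[OF sr] ab in auto)
  have yJ: "y \<in> J" unfolding y_def
    by (rule submodule_sum[OF subJ]) (use Jmult polyD polys_over_monom[OF sr] ab in auto)
  have fy: "f * y = Fract H Q"
  proof -
    have "f * y = (\<Sum>i<n. \<Sum>j<n. (Fract (monom 1 (i*d)) 1 * a i) * (Fract (monom 1 ((n-j)*d)) 1 * b j))"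
      unfolding f_def y_def by (rule sum_product)
    also have "\<dots> = (\<Sum>i<n. \<Sum>j<n. Fract (monom 1 (i*d + (n-j)*d) * P (i,j)) Q)"
    proof (intro sum.cong refl)
      fix i j assume "i \<in> {..<n}" "j \<in> {..<n}"
      hence ij: "a i * b j = Fract (P (i,j)) Q" using Pij by auto
      have "(Fract (monom 1 (i*d)) 1 * a i) * (Fract (monom 1 ((n-j)*d)) 1 * b j)
          = Fract (monom 1 (i*d)) 1 * Fract (monom 1 ((n-j)*d)) 1 * (a i * b j)" by (simp add: ac_simps)
      also have "\<dots> = Fract (monom 1 (i*d + (n-j)*d) * P (i,j)) Q" unfolding ij by (simp add: mult_monom)
      finally show "(Fract (monom 1 (i*d)) 1 * a i) * (Fract (monom 1 ((n-j)*d)) 1 * b j)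
          = Fract (monom 1 (i*d + (n-j)*d) * P (i,j)) Q" .
    qed
    also have "\<dots> = Fract H Q" unfolding H_def by (simp add: sum_fract[OF Q0])
    finally show ?thesis .
  qed
  have wD: "Fract Q H \<in> D" using NAmem QR HN by blast
  have yJ': "Fract Q H * y \<in> J" by (rule Jmult[OF wD yJ])
  have inv1: "f * (Fract Q H * y) = 1"
  proof -
    have "f * (Fract Q H * y) = Fract Q H * (f * y)" by (simp add: ac_simps)
    also have "\<dots> = Fract (Q * H) (H * Q)" unfolding fy by simp
    also have "\<dots> = 1" using Q0 H0 by (simp add: One_fract_def eq_fract)
    finally show ?thesis .
  qed
  have fD: "f \<in> D" using fI ID by blast
  have "I = {u * f | u. u \<in> D}"
  proof
    show "I \<subseteq> {u * f | u. u \<in> D}"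
    proof
      fix x assume x: "x \<in> I"
      have "x = (x * (Fract Q H * y)) * f" using inv1 by (simp add: ac_simps)
      moreover have "x * (Fract Q H * y) \<in> D" by (rule prod_in[OF x yJ'])
      ultimately show "x \<in> {u * f | u. u \<in> D}" by blast
    qed
    show "{u * f | u. u \<in> D} \<subseteq> I" using Imult fI by blast
  qed
  thus "principal_ideal (NA R gr st) I" unfolding D_def[symmetric] principal_ideal_def using fD by blast
qed

end
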